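(* For every positive integer $n$, the order supergraph $\mathcal{S}(A_n)$ of the alternating group $A_n$ is cyclically separable if and only if $n \geq 4$.
   Context: All graphs are simple and undirected. For a finite group $G$, the order supergraph $\mathcal{S}(G)$ is the graph with vertex set $G$ in which two distinct vertices $x,y$ are adjacent if and only if the order of $x$ divides the order of $y$ or the order of $y$ divides the order of $x$. For a graph $\Gamma$, a vertex cutset is a set $S$ of vertices such that $\Gamma - S$ is disconnected; a cyclic vertex cutset is a vertex cutset $S$ such that $\Gamma - S$ has at least two connected components each of which contains a cycle. $\Gamma$ is called cyclically separable if it has a cyclic vertex cutset. *)

theory Defs
  imports "HOL-Algebra.Sym_Groups" "HOL-Algebra.Multiplicative_Group"
begin

(* Simple graphs given by a vertex set V and a symmetric irreflexive adjacency relation E. *)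

definition walk_rel :: "'a set \<Rightarrow> ('a \<Rightarrow> 'a \<Rightarrow> bool) \<Rightarrow> ('a \<times> 'a) set" where
  "walk_rel V E = {(a, b). a \<in> V \<and> b \<in> V \<and> E a b}"

definition component :: "'a set \<Rightarrow> ('a \<Rightarrow> 'a \<Rightarrow> bool) \<Rightarrow> 'a \<Rightarrow> 'a set" where
  "component V E x = {y. (x, y) \<in> (walk_rel V E)\<^sup>*}"

definition components :: "'a set \<Rightarrow> ('a \<Rightarrow> 'a \<Rightarrow> bool) \<Rightarrow> 'a set set" where
  "components V E = component V E ` V"

definition has_cycle :: "'a set \<Rightarrow> ('a \<Rightarrow> 'a \<Rightarrow> bool) \<Rightarrow> bool" where
  "has_cycle C E = (\<exists>vs. length vs \<ge> 3 \<and> distinct vs \<and> set vs \<subseteq> C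
      \<and> (\<forall>i < length vs - 1. E (vs ! i) (vs ! Suc i))
      \<and> E (last vs) (hd vs))"

definition cyclic_vertex_cutset :: "'a set \<Rightarrow> ('a \<Rightarrow> 'a \<Rightarrow> bool) \<Rightarrow> 'a set \<Rightarrow> bool" where
  "cyclic_vertex_cutset V E S = (S \<subseteq> V \<and>
      (\<exists>C1 \<in> components (V - S) E. \<exists>C2 \<in> components (V - S) E.
          C1 \<noteq> C2 \<and> has_cycle C1 E \<and> has_cycle C2 E))"

definition cyclically_separable :: "'a set \<Rightarrow> ('a \<Rightarrow> 'a \<Rightarrow> bool) \<Rightarrow> bool" where
  "cyclically_separable V E = (\<exists>S. cyclic_vertex_cutset V E S)"

definition order_supergraph_adj :: "('a, 'b) monoid_scheme \<Rightarrow> 'a \<Rightarrow> 'a \<Rightarrow> bool" where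
  "order_supergraph_adj G x y = (x \<noteq> y \<and>
      (group.ord G x dvd group.ord G y \<or> group.ord G y dvd group.ord G x))"

end

theory Submission
  imports Defs
begin

lemma adj_sym: "order_supergraph_adj G x y = order_supergraph_adj G y x"
  unfolding order_supergraph_adj_def by auto

lemma walk_rel_sym: "sym (walk_rel V (order_supergraph_adj G))"
  unfolding sym_def walk_rel_def using adj_sym by fast

lemma component_sub:
  assumes "x \<in> V" shows "component V E x \<subseteq> V"
proof
  fix y assume "y \<in> component V E x"
  hence "(x, y) \<in> (walk_rel V E)\<^sup>*" by (simp add: component_def)
  then show "y \<in> V" by induct (auto simp: assms walk_rel_def)
qed

lemma components_disj:
  assumes "C1 \<in> components V (order_supergraph_adj G)" "C2 \<in> components V (order_supergraph_adj G)"
    "C1 \<noteq> C2"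
  shows "C1 \<inter> C2 = {}"
proof (rule ccontr)
  let ?R = "(walk_rel V (order_supergraph_adj G))\<^sup>*"
  have symR: "sym ?R" using walk_rel_sym sym_rtrancl by blast
  obtain x1 x2 where c: "C1 = component V (order_supergraph_adj G) x1"
    "C2 = component V (order_supergraph_adj G) x2"
    using assms by (auto simp: components_def)
  assume "C1 \<inter> C2 \<noteq> {}"
  then obtain y where y: "(x1, y) \<in> ?R" "(x2, y) \<in> ?R" by (auto simp: c component_def)
  have "(y, x1) \<in> ?R" "(y, x2) \<in> ?R" using y symR by (auto intro: symD)
  hence a: "(x1, x2) \<in> ?R" "(x2, x1) \<in> ?R" using y by (auto intro: rtrancl_trans)
  have "C1 \<subseteq> C2" unfolding c component_def using a(2) by (auto intro: rtrancl_trans)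
  moreover have "C2 \<subseteq> C1" unfolding c component_def using a(1) by (auto intro: rtrancl_trans)
  ultimately have "C1 = C2" by blast
  with assms show False by simp
qed

lemma cycle_card:
  assumes "has_cycle C E" "finite C" shows "card C \<ge> 3"
proof -
  obtain vs where "length vs \<ge> 3" "distinct vs" "set vs \<subseteq> C"
    using assms unfolding has_cycle_def by blast
  hence "card (set vs) = length vs" "card (set vs) \<le> card C"
    using card_mono[OF assms(2)] distinct_card by auto
  thus ?thesis using \<open>length vs \<ge> 3\<close> by linarith
qed

lemma not_sep_small:
  assumes "finite V" "card V < 6"
  shows "\<not> cyclically_separable V (order_supergraph_adj G)"
proof
  assume "cyclically_separable V (order_supergraph_adj G)"
  then obtain S C1 C2 where S: "S \<subseteq> V" and C: "C1 \<in> components (V - S) (order_supergraph_adj G)"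
    "C2 \<in> components (V - S) (order_supergraph_adj G)" "C1 \<noteq> C2"
    "has_cycle C1 (order_supergraph_adj G)" "has_cycle C2 (order_supergraph_adj G)"
    unfolding cyclically_separable_def cyclic_vertex_cutset_def by blast
  have sub: "C1 \<subseteq> V" "C2 \<subseteq> V"
  proof -
    obtain x1 where "x1 \<in> V - S" "C1 = component (V - S) (order_supergraph_adj G) x1"
      using C(1) unfolding components_def by blast
    thus "C1 \<subseteq> V" using component_sub[of x1 "V - S"] by blast
    obtain x2 where "x2 \<in> V - S" "C2 = component (V - S) (order_supergraph_adj G) x2"
      using C(2) unfolding components_def by blast
    thus "C2 \<subseteq> V" using component_sub[of x2 "V - S"] by blast
  qed
  hence fin: "finite C1" "finite C2" using finite_subset[OF _ assms(1)] by blast+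
  have "C1 \<inter> C2 = {}" by (rule components_disj[OF C(1-3)])
  hence "card (C1 \<union> C2) = card C1 + card C2" using card_Un_disjoint[OF fin] by blast
  moreover have "card C1 \<ge> 3" "card C2 \<ge> 3" using cycle_card[OF C(4) fin(1)] cycle_card[OF C(5) fin(2)] by auto
  ultimately have "card (C1 \<union> C2) \<ge> 6" by linarith
  moreover have "card (C1 \<union> C2) \<le> card V" using sub assms(1) card_mono[of V "C1 \<union> C2"] by blast
  ultimately show False using assms by simp
qed

lemma sep_generic:
  assumes G: "group G"
    and abc: "a \<in> carrier G" "b \<in> carrier G" "c \<in> carrier G"
      "group.ord G a = p" "group.ord G b = p" "group.ord G c = p" "a \<noteq> b" "b \<noteq> c" "a \<noteq> c"
    and def: "d \<in> carrier G" "e \<in> carrier G" "f \<in> carrier G"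
      "group.ord G d = q" "group.ord G e = q" "group.ord G f = q" "d \<noteq> e" "e \<noteq> f" "d \<noteq> f"
    and pq: "\<not> p dvd q" "\<not> q dvd p"
  shows "cyclically_separable (carrier G) (order_supergraph_adj G)"
proof -
  let ?E = "order_supergraph_adj G"
  define D where "D = {x \<in> carrier G. group.ord G x = p}"
  define T where "T = {x \<in> carrier G. group.ord G x = q}"
  define S where "S = carrier G - (D \<union> T)"
  have VS: "carrier G - S = D \<union> T" unfolding S_def D_def T_def by blast
  have DT: "D \<inter> T = {}" using pq unfolding D_def T_def by auto
  have closedD: "y \<in> D" if "(x, y) \<in> (walk_rel (carrier G - S) ?E)\<^sup>*" "x \<in> D" for x y
    using that
  proof induct
    case base then show ?case .
  next
    case (step y z)
    hence "y \<in> D" "z \<in> D \<union> T" "?E y z" by (auto simp: walk_rel_def VS)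
    thus ?case using pq unfolding order_supergraph_adj_def D_def T_def by auto
  qed
  have closedT: "y \<in> T" if "(x, y) \<in> (walk_rel (carrier G - S) ?E)\<^sup>*" "x \<in> T" for x y
    using that
  proof induct
    case base then show ?case .
  next
    case (step y z)
    hence "y \<in> T" "z \<in> D \<union> T" "?E y z" by (auto simp: walk_rel_def VS)
    thus ?case using pq unfolding order_supergraph_adj_def D_def T_def by auto
  qed
  have aD: "a \<in> D" "b \<in> D" "c \<in> D" using abc unfolding D_def by auto
  have dT: "d \<in> T" "e \<in> T" "f \<in> T" using def unfolding T_def by auto
  let ?C1 = "component (carrier G - S) ?E a"
  let ?C2 = "component (carrier G - S) ?E d"
  have C1: "?C1 \<in> components (carrier G - S) ?E" unfolding components_def using aD VS by blast
  have C2: "?C2 \<in> components (carrier G - S) ?E" unfolding components_def using dT VS by blast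
  have "d \<in> ?C2" unfolding component_def by simp
  moreover have "d \<notin> ?C1" using closedD[of a d] aD dT DT unfolding component_def by blast
  ultimately have ne: "?C1 \<noteq> ?C2" by blast
  have adjabc: "?E a b" "?E b c" "?E c a" using abc unfolding order_supergraph_adj_def by auto
  have adjdef: "?E d e" "?E e f" "?E f d" using def unfolding order_supergraph_adj_def by auto
  have inC1: "a \<in> ?C1" "b \<in> ?C1" "c \<in> ?C1" using adjabc aD VS adj_sym[of G c a]
    unfolding component_def walk_rel_def by auto
  have inC2: "d \<in> ?C2" "e \<in> ?C2" "f \<in> ?C2" using adjdef dT VS adj_sym[of G f d]
    unfolding component_def walk_rel_def by auto
  have "\<forall>i<length [a, b, c] - 1. ?E ([a, b, c] ! i) ([a, b, c] ! Suc i)"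
  proof (intro allI impI)
    fix i assume "i < length [a, b, c] - 1"
    hence "i = 0 \<or> i = 1" by auto
    thus "?E ([a, b, c] ! i) ([a, b, c] ! Suc i)" using adjabc by auto
  qed
  hence cyc1: "has_cycle ?C1 ?E" unfolding has_cycle_def
    using inC1 adjabc abc by (intro exI[of _ "[a, b, c]"]) auto
  have "\<forall>i<length [d, e, f] - 1. ?E ([d, e, f] ! i) ([d, e, f] ! Suc i)"
  proof (intro allI impI)
    fix i assume "i < length [d, e, f] - 1"
    hence "i = 0 \<or> i = 1" by auto
    thus "?E ([d, e, f] ! i) ([d, e, f] ! Suc i)" using adjdef by auto
  qed
  hence cyc2: "has_cycle ?C2 ?E" unfolding has_cycle_def
    using inC2 adjdef def by (intro exI[of _ "[d, e, f]"]) auto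
  have "cyclic_vertex_cutset (carrier G) ?E S"
    unfolding cyclic_vertex_cutset_def using C1 C2 ne cyc1 cyc2 S_def by blast
  thus ?thesis unfolding cyclically_separable_def by blast
qed

lemma ord_prime:
  assumes "group G" "x \<in> carrier G" "x \<noteq> \<one>\<^bsub>G\<^esub>" "x [^]\<^bsub>G\<^esub> p = \<one>\<^bsub>G\<^esub>" "p = (2::nat) \<or> p = 3"
  shows "group.ord G x = p"
proof -
  have "group.ord G x dvd p" using group.pow_eq_id[OF assms(1,2)] assms(4) by blast
  moreover have "group.ord G x \<noteq> 1" using group.ord_eq_1[OF assms(1,2)] assms(3) by blast
  moreover have "group.ord G x \<noteq> 0" using calculation(1) assms(5) by (metis dvd_0_left_iff zero_neq_numeral)
  moreover have "group.ord G x \<le> p" using calculation(1) assms(5) by (metis dvd_imp_le zero_less_numeral)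
  ultimately have "group.ord G x = 2 \<or> group.ord G x = 3" using assms(5) by linarith
  thus ?thesis using assms(5) \<open>group.ord G x dvd p\<close> \<open>group.ord G x \<le> p\<close> by auto
qed

lemma alt_pow2: "x [^]\<^bsub>alt_group n\<^esub> (2::nat) = x \<circ> x"
  by (simp add: numeral_2_eq_2 alt_group_mult alt_group_one)

lemma alt_pow3: "x [^]\<^bsub>alt_group n\<^esub> (3::nat) = x \<circ> x \<circ> x"
  by (simp add: numeral_3_eq_3 alt_group_mult alt_group_one comp_assoc)

lemma alt_mem:
  assumes "a \<in> {1..n}" "b \<in> {1..n}" "c \<in> {1..n}" "d \<in> {1..n}" "a \<noteq> b" "c \<noteq> d"
  shows "transpose a b \<circ> transpose c d \<in> carrier (alt_group n)"
  unfolding alt_group_carrier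
  using assms by (simp add: permutes_compose permutes_swap_id evenperm_comp permutation_swap_id evenperm_swap)

lemma sep_alt:
  assumes "n \<ge> 4"
  shows "cyclically_separable (carrier (alt_group n)) (order_supergraph_adj (alt_group n))"
proof -
  have G: "group (alt_group n)" by (rule alt_group_is_group)
  have r: "(1::nat) \<in> {1..n}" "(2::nat) \<in> {1..n}" "(3::nat) \<in> {1..n}" "(4::nat) \<in> {1..n}"
    using assms by auto
  define a where "a = transpose (1::nat) 2 \<circ> transpose 3 4"
  define b where "b = transpose (1::nat) 3 \<circ> transpose 2 4"
  define c where "c = transpose (1::nat) 4 \<circ> transpose 2 3"
  define d where "d = transpose (1::nat) 2 \<circ> transpose 2 3"
  define e where "e = transpose (2::nat) 3 \<circ> transpose 1 2"
  define f where "f = transpose (1::nat) 2 \<circ> transpose 2 4"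
  have mem: "a \<in> carrier (alt_group n)" "b \<in> carrier (alt_group n)" "c \<in> carrier (alt_group n)"
    "d \<in> carrier (alt_group n)" "e \<in> carrier (alt_group n)" "f \<in> carrier (alt_group n)"
    unfolding a_def b_def c_def d_def e_def f_def using r by (auto intro!: alt_mem)
  have vals: "a 1 = 2" "b 1 = 3" "c 1 = 4" "d 1 = 2" "e 1 = 3" "f 1 = 2" "d 2 = 3" "f 2 = 4"
    unfolding a_def b_def c_def d_def e_def f_def by (simp_all add: transpose_def)
  have sq: "a \<circ> a = id" "b \<circ> b = id" "c \<circ> c = id"
    unfolding a_def b_def c_def by (auto simp: fun_eq_iff transpose_def)
  have cu: "d \<circ> d \<circ> d = id" "e \<circ> e \<circ> e = id" "f \<circ> f \<circ> f = id"
    unfolding d_def e_def f_def by (auto simp: fun_eq_iff transpose_def)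
  have ne1: "\<And>g h (x::nat). g x \<noteq> h x \<Longrightarrow> g \<noteq> h" by metis
  have neq: "a \<noteq> id" "b \<noteq> id" "c \<noteq> id" "d \<noteq> id" "e \<noteq> id" "f \<noteq> id"
    using vals by (auto intro!: ne1[of _ 1])
  have o2: "group.ord (alt_group n) a = 2" "group.ord (alt_group n) b = 2" "group.ord (alt_group n) c = 2"
    using ord_prime[OF G] mem neq sq by (simp_all add: alt_pow2 alt_group_one)
  have o3: "group.ord (alt_group n) d = 3" "group.ord (alt_group n) e = 3" "group.ord (alt_group n) f = 3"
    using ord_prime[OF G] mem neq cu by (simp_all add: alt_pow3 alt_group_one)
  have dst: "a \<noteq> b" "b \<noteq> c" "a \<noteq> c" "d \<noteq> e" "e \<noteq> f" "d \<noteq> f"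
    using vals by (auto intro: ne1[of _ 1] ne1[of _ 2])
  have pq: "\<not> (2::nat) dvd 3" "\<not> (3::nat) dvd 2" by simp_all
  show ?thesis
    by (rule sep_generic[OF G mem(1-3) o2 dst(1-3) mem(4-6) o3 dst(4-6) pq])
qed

lemma alt_small:
  assumes "n \<ge> 1" "n < 4"
  shows "finite (carrier (alt_group n))" "card (carrier (alt_group n)) < 6"
proof -
  have sub: "carrier (alt_group n) \<subseteq> carrier (sym_group n)"
    by (auto simp: alt_group_carrier sym_group_carrier)
  have fs: "finite (carrier (sym_group n))"
    unfolding sym_group_def using finite_permutations[of "{1..n}"] by simp
  thus "finite (carrier (alt_group n))" using sub finite_subset by blast
  have fn: "fact n \<le> (6::nat)"
  proof -
    have "fact n \<le> (fact 3::nat)" using assms fact_mono[of n 3] by simp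
    also have "(fact 3::nat) = 6" by (simp add: numeral_3_eq_3)
    finally show ?thesis .
  qed
  show "card (carrier (alt_group n)) < 6"
  proof (cases "n \<ge> 2")
    case True
    then show ?thesis using alt_group_card_carrier[OF True] fn by linarith
  next
    case False
    hence "n = 1" using assms by simp
    hence "card (carrier (sym_group n)) = 1" using sym_group_card_carrier[of n] by simp
    thus ?thesis using card_mono[OF fs sub] by simp
  qed
qed

theorem mainTheorem7:
  fixes n :: nat
  assumes "n \<ge> 1"
  shows "cyclically_separable (carrier (alt_group n)) (order_supergraph_adj (alt_group n))
           \<longleftrightarrow> n \<ge> 4"
proof
  assume h: "cyclically_separable (carrier (alt_group n)) (order_supergraph_adj (alt_group n))"
  show "n \<ge> 4"
  proof (rule ccontr)
    assume "\<not> n \<ge> 4"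
    hence "n < 4" by simp
    with not_sep_small[OF alt_small[OF assms this]] h show False by blast
  qed
next
  assume "n \<ge> 4" thus "cyclically_separable (carrier (alt_group n)) (order_supergraph_adj (alt_group n))"
    by (rule sep_alt)
qed

end
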